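(* For every positive integer $n$, $$\overline{\mathrm{spt}}_{\omega}(n)\equiv\overline{\mathrm{spt}}(n)\equiv\begin{cases}1\pmod 2 & \text{if } n=k^2 \text{ or } n=2k^2 \text{ for some integer } k,\\ 0\pmod 2&\text{otherwise.}\end{cases}$$
   Context: $(a;q)_n=\prod_{j=0}^{n-1}(1-aq^j)$, $(a;q)_\infty=\prod_{j\ge0}(1-aq^j)$. $\overline{\mathrm{spt}}(n)$ is defined by $\sum_{n\ge1}\overline{\mathrm{spt}}(n)q^n=\sum_{n\ge1}\frac{q^n(-q^{n+1};q)_\infty}{(1-q^n)^2(q^{n+1};q)_\infty}$ (the number of smallest parts in overpartitions of $n$ whose smallest part is overlined). $\overline{\mathrm{spt}}_{\omega}(n)$ is defined by $\sum_{n\ge1}\overline{\mathrm{spt}}_{\omega}(n)q^n=\sum_{n\ge1}\frac{q^{n}(-q^{n+1};q)_{n}(-q^{2n+2};q^2)_{\infty}}{(1-q^n)^2(q^{n+1};q)_n(q^{2n+2};q^2)_{\infty}}$ (the number of smallest parts in overpartitions of $n$ with smallest part overlined and all odd parts less than twice the smallest part). *)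

theory Defs
  imports Main "HOL-Library.Multiset"
begin

text \<open>An overpartition of n is encoded as a pair (p, ov): p is a partition of n
  (a multiset of positive integers with sum n) and ov is the set of part sizes
  whose first occurrence is overlined (so ov is a subset of the set of parts).\<close>

definition overpartitions :: "nat \<Rightarrow> (nat multiset \<times> nat set) set" where
  "overpartitions n = {(p, ov). (\<forall>x \<in># p. 0 < x) \<and> sum_mset p = n \<and> ov \<subseteq> set_mset p}"

definition spart :: "nat multiset \<Rightarrow> nat" where
  "spart p = Min (set_mset p)"

definition sptbar :: "nat \<Rightarrow> nat" where
  "sptbar n = (\<Sum>(p, ov) \<in> {(p, ov) \<in> overpartitions n. p \<noteq> {#} \<and> spart p \<in> ov}.
                 count p (spart p))"

definition sptbar_omega :: "nat \<Rightarrow> nat" where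
  "sptbar_omega n = (\<Sum>(p, ov) \<in> {(p, ov) \<in> overpartitions n. p \<noteq> {#} \<and> spart p \<in> ov
                         \<and> (\<forall>x \<in># p. odd x \<longrightarrow> x < 2 * spart p)}.
                 count p (spart p))"

end

theory Submission
  imports Defs
begin

lemma inv_parity:
  "finite A \<Longrightarrow> (\<forall>x\<in>A. f x \<in> A \<and> f (f x) = x) \<Longrightarrow>
   card A mod 2 = card {x\<in>A. f x = x} mod 2"
proof (induction "card A" arbitrary: A rule: less_induct)
  case less
  show ?case
  proof (cases "\<forall>x\<in>A. f x = x")
    case True
    then have "{x\<in>A. f x = x} = A" by auto
    then show ?thesis by simp
  next
    case False
    then obtain x where x: "x \<in> A" "f x \<noteq> x" by auto
    define A' where "A' = A - {x, f x}"
    have fx: "f x \<in> A" using less.prems x by auto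
    have c2: "card {x, f x} = 2" using x by simp
    have sub: "{x, f x} \<subseteq> A" using x fx by simp
    have "card A \<ge> 2" using card_mono[OF less.prems(1) sub] c2 by simp
    then have cA: "card A = card A' + 2"
      using less.prems(1) sub c2 unfolding A'_def
      by (simp add: card_Diff_subset)
    have fin: "finite A'" using less.prems(1) A'_def by simp
    have inv: "\<forall>y\<in>A'. f y \<in> A' \<and> f (f y) = y"
    proof
      fix y assume y: "y \<in> A'"
      then have yA: "y \<in> A" "y \<noteq> x" "y \<noteq> f x" unfolding A'_def by auto
      have ff: "f (f y) = y" "f y \<in> A" using less.prems(2) yA(1) by auto
      have ffx: "f (f x) = x" using less.prems(2) x(1) by auto
      have "f y \<noteq> x" using ff(1) yA(3) by auto
      moreover have "f y \<noteq> f x" using ff(1) ffx yA(2) by metis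
      ultimately show "f y \<in> A' \<and> f (f y) = y" using ff unfolding A'_def by auto
    qed
    have IH: "card A' mod 2 = card {y\<in>A'. f y = y} mod 2"
      using less.hyps[OF _ fin inv] cA by simp
    have "{y\<in>A'. f y = y} = {y\<in>A. f y = y}"
      unfolding A'_def using x less.prems(2) by auto
    then show ?thesis using IH cA by simp
  qed
qed

definition sq :: "nat \<Rightarrow> bool" where
  "sq n = (\<exists>k::nat. n = k^2 \<or> n = 2*k^2)"

lemma sq_int: "(\<exists>k::int. int n = k^2 \<or> int n = 2 * k^2) = sq n"
proof
  assume "\<exists>k::int. int n = k^2 \<or> int n = 2 * k^2"
  then obtain k :: int where "int n = k^2 \<or> int n = 2 * k^2" by blast
  then have "int n = int ((nat \<bar>k\<bar>)^2) \<or> int n = int (2 * (nat \<bar>k\<bar>)^2)" by simp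
  then have "n = (nat \<bar>k\<bar>)^2 \<or> n = 2 * (nat \<bar>k\<bar>)^2"
    by (simp only: of_nat_eq_iff)
  then show "sq n" unfolding sq_def by blast
next
  assume "sq n"
  then obtain k where "n = k^2 \<or> n = 2*k^2" unfolding sq_def by blast
  then have "int n = (int k)^2 \<or> int n = 2 * (int k)^2" by auto
  then show "\<exists>k::int. int n = k^2 \<or> int n = 2 * k^2" by blast
qed

lemma sq_double: "sq (2*m) = sq m"
proof
  assume "sq (2*m)"
  then obtain k where "2*m = k^2 \<or> 2*m = 2*k^2" unfolding sq_def by blast
  then show "sq m"
  proof
    assume h: "2*m = k^2"
    then have "even (k^2)" by (metis dvd_triv_left)
    then have "even k" by simp
    then obtain j where "k = 2*j" by blast
    with h have "m = 2*j^2" by (simp add: power2_eq_square)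
    then show ?thesis unfolding sq_def by blast
  next
    assume "2*m = 2*k^2"
    then show ?thesis unfolding sq_def by auto
  qed
next
  assume "sq m"
  then obtain k where "m = k^2 \<or> m = 2*k^2" unfolding sq_def by blast
  then have "2*m = 2*k^2 \<or> 2*m = (2*k)^2" by (auto simp: power2_eq_square)
  then show "sq (2*m)" unfolding sq_def by blast
qed

lemma sq_odd: "odd n \<Longrightarrow> sq n = (\<exists>k. n = k^2)"
  unfolding sq_def by (metis dvd_triv_left)
lemma odd_div_double: "{d::nat. d dvd 2*m \<and> odd d} = {d. d dvd m \<and> odd d}"
proof -
  have "d dvd 2*m \<longleftrightarrow> d dvd m" if "odd d" for d :: nat
  proof -
    have "coprime d 2" using that by simp
    then show ?thesis using coprime_dvd_mult_right_iff by blast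
  qed
  then show ?thesis by blast
qed
lemma fixed_card:
  assumes "n \<ge> (1::nat)"
  shows "card {d\<in>{d. d dvd n}. n div d = d} = (if \<exists>k. n = k^2 then 1 else 0)"
proof (cases "\<exists>k. n = k^2")
  case True
  then obtain k where k: "n = k^2" by blast
  have E: "{d\<in>{d. d dvd n}. n div d = d} = {k}"
  proof (intro set_eqI iffI)
    fix d assume "d \<in> {d\<in>{d. d dvd n}. n div d = d}"
    then have "d dvd n" "n div d = d" by auto
    then have "d^2 = k^2" using k by (metis dvd_mult_div_cancel power2_eq_square)
    then show "d \<in> {k}" by (simp add: power2_eq_iff_nonneg)
  next
    fix d assume "d \<in> {k}"
    then have "d = k" by simp
    moreover have "k > 0" using k assms by (cases k) auto
    ultimately show "d \<in> {d\<in>{d. d dvd n}. n div d = d}" using k by (simp add: power2_eq_square)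
  qed
  show ?thesis unfolding E using True by simp
next
  case False
  have E: "{d\<in>{d. d dvd n}. n div d = d} = {}"
  proof (intro set_eqI iffI)
    fix d assume "d \<in> {d\<in>{d. d dvd n}. n div d = d}"
    then have "d dvd n" "n div d = d" by auto
    then have "n = d^2" by (metis dvd_mult_div_cancel power2_eq_square)
    then show "d \<in> {}" using False by blast
  qed auto
  show ?thesis unfolding E using False by simp
qed

lemma od_parity:
  "n \<ge> 1 \<Longrightarrow> card {d. d dvd n \<and> odd d} mod 2 = (if sq n then 1 else 0)"
proof (induction n rule: less_induct)
  case (less n)
  show ?case
  proof (cases "even n")
    case True
    then obtain m where m: "n = 2*m" by blast
    with less.prems have m1: "m \<ge> 1" "m < n" by auto
    have "{d. d dvd n \<and> odd d} = {d. d dvd m \<and> odd d}"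
      using m odd_div_double by simp
    then show ?thesis using less.IH[OF m1(2) m1(1)] m sq_double by simp
  next
    case False
    have fin: "finite {d. d dvd n}" using less.prems by simp
    have e: "{d. d dvd n \<and> odd d} = {d. d dvd n}" using False by (auto dest: dvd_trans)
    have inv: "\<forall>d\<in>{d. d dvd n}. n div d \<in> {d. d dvd n} \<and> n div (n div d) = d"
      using less.prems by (auto simp: div_div_eq_right dvd_div_eq_mult)
    show ?thesis
      using inv_parity[OF fin inv] e fixed_card[OF less.prems] sq_odd[OF False] by auto
  qed
qed
lemma mem_le_sum: "x \<in># (p::nat multiset) \<Longrightarrow> x \<le> sum_mset p"
proof -
  assume "x \<in># p"
  have "sum_mset (add_mset x (p - {#x#})) = x + sum_mset (p - {#x#})" by simp
  then show ?thesis using \<open>x \<in># p\<close> by (simp add: insert_DiffM)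
qed

lemma size_le_sum: "(\<forall>x\<in>#p. 0 < (x::nat)) \<Longrightarrow> size p \<le> sum_mset p"
proof (induction p)
  case empty then show ?case by simp
next
  case (add x p) then show ?case by simp
qed

lemma fin_parts: "finite {p::nat multiset. (\<forall>x\<in>#p. 0<x) \<and> sum_mset p = n}"
proof -
  have "{p::nat multiset. (\<forall>x\<in>#p. 0<x) \<and> sum_mset p = n} \<subseteq> mset ` {xs. set xs \<subseteq> {1..n} \<and> length xs \<le> n}"
  proof
    fix p :: "nat multiset" assume "p \<in> {p. (\<forall>x\<in>#p. 0<x) \<and> sum_mset p = n}"
    then have pos: "\<forall>x\<in>#p. 0<x" and s: "sum_mset p = n" by auto
    obtain xs where xs: "mset xs = p" using ex_mset by blast
    have "set xs \<subseteq> {1..n}"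
    proof
      fix x assume "x \<in> set xs"
      then have "x \<in># p" using xs by auto
      then have "0 < x" "x \<le> n" using pos mem_le_sum[of x p] s by auto
      then show "x \<in> {1..n}" by simp
    qed
    moreover have "length xs \<le> n" using xs size_le_sum[OF pos] s by auto
    ultimately show "p \<in> mset ` {xs. set xs \<subseteq> {1..n} \<and> length xs \<le> n}" using xs by blast
  qed
  moreover have "finite (mset ` {xs. set xs \<subseteq> {1..n} \<and> length xs \<le> n})"
    using finite_lists_length_le[of "{1..n}" n] by simp
  ultimately show ?thesis using finite_subset by blast
qed

lemma spart_in: "p \<noteq> {#} \<Longrightarrow> spart p \<in># p"
  unfolding spart_def by (simp add: Min_in)

lemma card_B:
  assumes "p \<noteq> {#}"
  shows "card {ov. spart p \<in> ov \<and> ov \<subseteq> set_mset p} = 2^(card (set_mset p) - 1)"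
proof -
  let ?s = "spart p" and ?X = "set_mset p"
  have sX: "?s \<in> ?X" using spart_in[OF assms] by simp
  have eq: "{ov. ?s \<in> ov \<and> ov \<subseteq> ?X} = insert ?s ` Pow (?X - {?s})"
  proof (intro set_eqI iffI)
    fix ov assume "ov \<in> {ov. ?s \<in> ov \<and> ov \<subseteq> ?X}"
    then have "ov = insert ?s (ov - {?s})" "ov - {?s} \<in> Pow (?X - {?s})" by auto
    then show "ov \<in> insert ?s ` Pow (?X - {?s})" by blast
  next
    fix ov assume "ov \<in> insert ?s ` Pow (?X - {?s})"
    then show "ov \<in> {ov. ?s \<in> ov \<and> ov \<subseteq> ?X}" using sX by auto
  qed
  have inj: "inj_on (insert ?s) (Pow (?X - {?s}))"
  proof (rule inj_onI)
    fix A B assume A: "A \<in> Pow (?X - {?s})" and B: "B \<in> Pow (?X - {?s})" and e: "insert ?s A = insert ?s B"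
    have "?s \<notin> A" "?s \<notin> B" using A B by auto
    then have "A = insert ?s A - {?s}" "B = insert ?s B - {?s}" by auto
    then show "A = B" using e by simp
  qed
  have "card {ov. ?s \<in> ov \<and> ov \<subseteq> ?X} = card (Pow (?X - {?s}))"
    unfolding eq by (rule card_image[OF inj])
  also have "\<dots> = 2^(card (?X - {?s}))" by (simp add: card_Pow)
  also have "card (?X - {?s}) = card ?X - 1" using sX by simp
  finally show ?thesis .
qed

lemma single_part:
  assumes "set_mset p = {s}"
  shows "p = replicate_mset (count p s) s"
proof (rule multiset_eqI)
  fix x show "count p x = count (replicate_mset (count p s) s) x"
    using assms by (cases "x = s") (auto simp: count_eq_zero_iff)
qed

lemma spart_rep: "m > 0 \<Longrightarrow> spart (replicate_mset m s) = s"
  unfolding spart_def by simp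


lemma sum_mod2_cong:
  "(\<And>x. x \<in> A \<Longrightarrow> f x mod 2 = g x mod 2) \<Longrightarrow> (sum f A :: nat) mod 2 = sum g A mod 2"
proof -
  assume h: "\<And>x. x \<in> A \<Longrightarrow> f x mod 2 = g x mod 2"
  have "sum f A mod 2 = (\<Sum>x\<in>A. f x mod 2) mod 2" by (simp only: mod_sum_eq)
  also have "(\<Sum>x\<in>A. f x mod 2) = (\<Sum>x\<in>A. g x mod 2)" by (rule sum.cong) (simp_all add: h)
  also have "(\<Sum>x\<in>A. g x mod 2) mod 2 = sum g A mod 2" by (simp only: mod_sum_eq)
  finally show ?thesis .
qed

lemma sigma_parity:
  assumes "n \<ge> (1::nat)"
  shows "(\<Sum>d\<in>{d::nat. d dvd n}. d) mod 2 = card {d. d dvd n \<and> odd d} mod 2"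
proof -
  have fin: "finite {d::nat. d dvd n}" using assms by simp
  have "(\<Sum>d\<in>{d::nat. d dvd n}. d) mod 2 = (\<Sum>d\<in>{d::nat. d dvd n}. if odd d then 1 else 0) mod 2"
    by (rule sum_mod2_cong) (simp add: odd_iff_mod_2_eq_one)
  also have "(\<Sum>d\<in>{d::nat. d dvd n}. if odd d then 1 else 0) = card {d. d dvd n \<and> odd d}"
    using sum.inter_filter[OF fin, of "\<lambda>_. 1::nat" odd] by (simp only: card_eq_sum mem_Collect_eq)
  finally show ?thesis .
qed

lemma main:
  fixes P :: "nat multiset \<Rightarrow> bool" and n :: nat
  assumes n1: "n \<ge> 1" and PR: "\<And>m s. m > 0 \<Longrightarrow> s > 0 \<Longrightarrow> P (replicate_mset m s)"
  shows "(\<Sum>(p, ov) \<in> {(p, ov) \<in> overpartitions n. p \<noteq> {#} \<and> spart p \<in> ov \<and> P p}.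
                 count p (spart p)) mod 2 = card {d. d dvd n \<and> odd d} mod 2"
proof -
  define A where "A = {p. (\<forall>x\<in>#p. 0<x) \<and> sum_mset p = n \<and> p \<noteq> {#} \<and> P p}"
  define B where "B p = {ov. spart p \<in> ov \<and> ov \<subseteq> set_mset p}" for p
  define w where "w p = count p (spart p)" for p :: "nat multiset"
  define c where "c p = card (set_mset p)" for p :: "nat multiset"
  have S: "{(p, ov) \<in> overpartitions n. p \<noteq> {#} \<and> spart p \<in> ov \<and> P p} = Sigma A B"
    by (auto simp: overpartitions_def A_def B_def)
  have finA: "finite A"
    by (rule finite_subset[OF _ fin_parts[of n]]) (auto simp: A_def)
  have finB: "finite (B p)" for p
    by (rule finite_subset[of _ "Pow (set_mset p)"]) (auto simp: B_def)
  have "(\<Sum>(p, ov) \<in> Sigma A B. count p (spart p)) = (\<Sum>p\<in>A. \<Sum>ov\<in>B p. count p (spart p))"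
    using sum.Sigma[OF finA, of B "\<lambda>p ov. count p (spart p)"] finB by simp
  also have "\<dots> = (\<Sum>p\<in>A. 2^(c p - 1) * w p)"
  proof (rule sum.cong[OF refl])
    fix p assume "p \<in> A"
    then have "p \<noteq> {#}" by (simp add: A_def)
    then show "(\<Sum>ov\<in>B p. count p (spart p)) = 2^(c p - 1) * w p"
      using card_B[of p] by (simp add: B_def c_def w_def)
  qed
  finally have e1: "(\<Sum>(p, ov) \<in> Sigma A B. count p (spart p)) = (\<Sum>p\<in>A. 2^(c p - 1) * w p)" .
  have e2: "(\<Sum>p\<in>A. 2^(c p - 1) * w p) mod 2 = (\<Sum>p\<in>A. if c p = 1 then w p else 0) mod 2"
  proof (rule sum_mod2_cong)
    fix p assume "p \<in> A"
    show "2^(c p - 1) * w p mod 2 = (if c p = 1 then w p else 0) mod 2"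
    proof (cases "c p = 1")
      case True then show ?thesis by simp
    next
      case False
      then have "c p - 1 \<ge> 1"
        using \<open>p \<in> A\<close> by (cases "c p") (auto simp: A_def c_def)
      then obtain j where j: "c p - 1 = Suc j" by (cases "c p - 1") auto
      have ev: "even (2^(c p - 1) * w p)" unfolding j by simp
      have "2^(c p - 1) * w p mod 2 = 0" using ev even_iff_mod_2_eq_zero by blast
      moreover have "(if c p = 1 then w p else 0) mod 2 = 0" using False by simp
      ultimately show ?thesis by simp
    qed
  qed
  define A1 where "A1 = {p\<in>A. c p = 1}"
  have e3: "(\<Sum>p\<in>A. if c p = 1 then w p else 0) = (\<Sum>p\<in>A1. w p)"
    unfolding A1_def by (simp add: sum.inter_filter[OF finA])
  have e4: "(\<Sum>p\<in>A1. w p) = (\<Sum>s\<in>{s. s dvd n}. n div s)"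
  proof (rule sum.reindex_bij_witness[where j = spart and i = "\<lambda>s. replicate_mset (n div s) s"])
    fix p assume p: "p \<in> A1"
    then have pA: "(\<forall>x\<in>#p. 0<x)" "sum_mset p = n" "p \<noteq> {#}" and cp: "card (set_mset p) = 1"
      by (auto simp: A1_def A_def c_def)
    obtain s where s: "set_mset p = {s}" using cp card_1_singletonE by blast
    have sp: "spart p = s" unfolding spart_def s by simp
    define k where "k = count p s"
    have prep: "p = replicate_mset k s" unfolding k_def by (rule single_part[OF s])
    have "k * s = n" using pA(2) prep by simp
    moreover have "s > 0" using pA(1) s by auto
    ultimately have cn: "k = n div s" "s dvd n" by auto
    have cn1: "count p s = n div s" using cn(1) k_def by simp
    show "replicate_mset (n div spart p) (spart p) = p" using prep cn sp by simp
    show "spart p \<in> {s. s dvd n}" using cn sp by simp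
    show "n div spart p = w p" using cn1 sp by (simp add: w_def)
  next
    fix s assume "s \<in> {s. s dvd n}"
    then have sd: "s dvd n" by simp
    then have s0: "s > 0" using n1 by (cases s) auto
    have "n = s * (n div s)" using sd by simp
    then have m0: "n div s > 0" using n1 by (cases "n div s") auto
    show "spart (replicate_mset (n div s) s) = s" using spart_rep[OF m0] .
    have "sum_mset (replicate_mset (n div s) s) = n" using sd by simp
    moreover have "set_mset (replicate_mset (n div s) s) = {s}" using m0 by simp
    ultimately show "replicate_mset (n div s) s \<in> A1"
      using s0 m0 PR[OF m0 s0] by (auto simp: A1_def A_def c_def)
  qed
  have e5: "(\<Sum>s\<in>{s. s dvd n}. n div s) = (\<Sum>d\<in>{d. d dvd n}. d)"
  proof (rule sum.reindex_bij_witness[where j = "\<lambda>d. n div d" and i = "\<lambda>d. n div d"])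
    fix a assume "a \<in> {d. d dvd n}"
    then have a: "a dvd n" by simp
    then obtain k where k: "n = a * k" by (rule dvdE)
    have "k > 0" using n1 k by (cases k) auto
    moreover have "a > 0" using n1 k by (cases a) auto
    ultimately show "n div (n div a) = a" using k by simp
    show "n div a \<in> {d. d dvd n}" using a by (metis dvd_mult_div_cancel dvd_triv_right mem_Collect_eq)
    show "n div a = n div a" by simp
  next
    fix a assume "a \<in> {d. d dvd n}"
    then have a: "a dvd n" by simp
    then obtain k where k: "n = a * k" by (rule dvdE)
    have "k > 0" using n1 k by (cases k) auto
    moreover have "a > 0" using n1 k by (cases a) auto
    ultimately show "n div (n div a) = a" using k by simp
    show "n div a \<in> {d. d dvd n}" using a by (metis dvd_mult_div_cancel dvd_triv_right mem_Collect_eq)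
  qed
  have "(\<Sum>(p, ov) \<in> Sigma A B. count p (spart p)) mod 2 = (\<Sum>p\<in>A. if c p = 1 then w p else 0) mod 2"
    by (simp only: e1 e2)
  also have "\<dots> = (\<Sum>d\<in>{d. d dvd n}. d) mod 2"
    by (simp only: e3 e4 e5)
  also have "\<dots> = card {d. d dvd n \<and> odd d} mod 2" by (rule sigma_parity[OF n1])
  finally show ?thesis unfolding S .
qed


theorem theorem1p6:
  fixes n :: nat
  assumes "n \<ge> 1"
  shows "sptbar_omega n mod 2 = (if \<exists>k::int. int n = k^2 \<or> int n = 2 * k^2 then 1 else 0)
       \<and> sptbar n mod 2 = (if \<exists>k::int. int n = k^2 \<or> int n = 2 * k^2 then 1 else 0)"
proof -
  have o: "card {d. d dvd n \<and> odd d} mod 2 = (if sq n then 1 else 0)"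
    by (rule od_parity[OF assms])
  have m1: "sptbar_omega n mod 2 = card {d. d dvd n \<and> odd d} mod 2"
    unfolding sptbar_omega_def
  proof (rule main[OF assms, where P = "\<lambda>p. \<forall>x \<in># p. odd x \<longrightarrow> x < 2 * spart p"])
    fix m s :: nat assume "m > 0" "s > 0"
    then show "\<forall>x \<in># replicate_mset m s. odd x \<longrightarrow> x < 2 * spart (replicate_mset m s)"
      using spart_rep[of m s] by simp
  qed
  have eq: "{(p, ov) \<in> overpartitions n. p \<noteq> {#} \<and> spart p \<in> ov}
          = {(p, ov) \<in> overpartitions n. p \<noteq> {#} \<and> spart p \<in> ov \<and> (\<lambda>_. True) p}"
    by simp
  have m2: "sptbar n mod 2 = card {d. d dvd n \<and> odd d} mod 2"
    unfolding sptbar_def eq by (rule main[OF assms]) simp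
  show ?thesis using m1 m2 o sq_int[of n] by simp
qed

end
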